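(* For every positive integer $n$, the domination polynomial of the book graph $B_n$ is $$D(B_n,x)=(x^2+2x)^n(2x+1)+x^2(x+1)^{2n}-2x^n.$$ *)

theory Defs
  imports "HOL-Computational_Algebra.Polynomial"
begin

type_synonym 'a graph = "'a set \<times> ('a \<Rightarrow> 'a \<Rightarrow> bool)"

definition verts :: "'a graph \<Rightarrow> 'a set" where "verts G = fst G"
definition adj :: "'a graph \<Rightarrow> 'a \<Rightarrow> 'a \<Rightarrow> bool" where "adj G = snd G"

definition dominating_set :: "'a graph \<Rightarrow> 'a set \<Rightarrow> bool" where
  "dominating_set G S \<longleftrightarrow> S \<subseteq> verts G \<and>
     (\<forall>v\<in>verts G. v \<in> S \<or> (\<exists>u\<in>S. adj G u v))"

definition domination_poly :: "'a graph \<Rightarrow> int poly" where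
  "domination_poly G = (\<Sum>S\<in>{S. dominating_set G S}. monom 1 (card S))"

definition star_graph :: "nat \<Rightarrow> nat graph" where
  "star_graph n = ({0..n}, \<lambda>i j. (i = 0 \<and> 1 \<le> j \<and> j \<le> n) \<or> (j = 0 \<and> 1 \<le> i \<and> i \<le> n))"

definition K2 :: "nat graph" where
  "K2 = ({0,1}, \<lambda>i j. i \<noteq> j \<and> i \<in> {0,1} \<and> j \<in> {0,1})"

definition cart_prod :: "'a graph \<Rightarrow> 'b graph \<Rightarrow> ('a \<times> 'b) graph" where
  "cart_prod G H = (verts G \<times> verts H,
     \<lambda>(a,b) (c,d). (a = c \<and> a \<in> verts G \<and> adj H b d) \<or> (b = d \<and> b \<in> verts H \<and> adj G a c))"

definition book_graph :: "nat \<Rightarrow> (nat \<times> nat) graph" where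
  "book_graph n = cart_prod (star_graph n) K2"

end

theory Submission imports Defs "HOL-Library.FuncSet" begin

lemma verts_book: "verts (book_graph n) = {0..n} \<times> {0,1}"
  by (simp add: book_graph_def cart_prod_def verts_def star_graph_def K2_def)

lemma adj_book: "adj (book_graph n) (a,b) (c,d) \<longleftrightarrow>
  (a = c \<and> a \<le> n \<and> b \<noteq> d \<and> b \<in> {0,1} \<and> d \<in> {0,1}) \<or>
  (b = d \<and> b \<in> {0,1} \<and> ((a = 0 \<and> 1 \<le> c \<and> c \<le> n) \<or> (c = 0 \<and> 1 \<le> a \<and> a \<le> n)))"
  by (auto simp add: book_graph_def cart_prod_def verts_def adj_def star_graph_def K2_def)

definition phi :: "nat \<Rightarrow> nat set \<Rightarrow> (nat \<Rightarrow> nat set) \<Rightarrow> (nat \<times> nat) set" where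
  "phi n C f = Pair 0 ` C \<union> Sigma {1..n} f"

lemma dom_char:
  assumes C: "C \<subseteq> {0,1}" and f: "f \<in> PiE {1..n} (\<lambda>_. Pow {0,1})"
  shows "dominating_set (book_graph n) (phi n C f) \<longleftrightarrow>
    (\<forall>i\<in>{1..n}. (0 \<in> C \<or> f i \<noteq> {}) \<and> (1 \<in> C \<or> f i \<noteq> {})) \<and>
    (C \<noteq> {} \<or> ((\<exists>i\<in>{1..n}. 0 \<in> f i) \<and> (\<exists>i\<in>{1..n}. 1 \<in> f i)))" (is "_ \<longleftrightarrow> ?R")
proof -
  have fi: "\<And>i. i \<in> {1..n} \<Longrightarrow> f i \<subseteq> {0,1}" using f by auto
  have sub: "phi n C f \<subseteq> verts (book_graph n)"
  proof
    fix x assume "x \<in> phi n C f"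
    then show "x \<in> verts (book_graph n)" using C fi unfolding phi_def verts_book apply auto
      using fi by fastforce
  qed
  have "dominating_set (book_graph n) (phi n C f) \<longleftrightarrow>
     (\<forall>a b. a \<le> n \<and> b \<in> {0,1} \<longrightarrow> (a,b) \<in> phi n C f \<or> (\<exists>c d. (c,d) \<in> phi n C f \<and> adj (book_graph n) (c,d) (a,b)))"
    using sub unfolding dominating_set_def verts_book by fastforce
  also have "\<dots> \<longleftrightarrow> ?R"
  proof
    assume H: "\<forall>a b. a \<le> n \<and> b \<in> {0,1} \<longrightarrow> (a,b) \<in> phi n C f \<or> (\<exists>c d. (c,d) \<in> phi n C f \<and> adj (book_graph n) (c,d) (a,b))"
    show ?R
    proof (intro conjI ballI)
      fix i assume i: "i \<in> {1..n}"
      show "0 \<in> C \<or> f i \<noteq> {}" using H[rule_format, of i 0] i fi[OF i] by (auto simp: phi_def adj_book)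
      show "1 \<in> C \<or> f i \<noteq> {}" using H[rule_format, of i 1] i fi[OF i] by (auto simp: phi_def adj_book)
    next
      show "C \<noteq> {} \<or> ((\<exists>i\<in>{1..n}. 0 \<in> f i) \<and> (\<exists>i\<in>{1..n}. 1 \<in> f i))"
        using H[rule_format, of 0 0] H[rule_format, of 0 1] by (auto simp: phi_def adj_book)
    qed
  next
    assume H: ?R
    show "\<forall>a b. a \<le> n \<and> b \<in> {0,1} \<longrightarrow> (a,b) \<in> phi n C f \<or> (\<exists>c d. (c,d) \<in> phi n C f \<and> adj (book_graph n) (c,d) (a,b))"
    proof (intro allI impI)
      fix a b :: nat assume ab: "a \<le> n \<and> b \<in> {0,1}"
      show "(a,b) \<in> phi n C f \<or> (\<exists>c d. (c,d) \<in> phi n C f \<and> adj (book_graph n) (c,d) (a,b))"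
      proof (cases "a = 0")
        case True
        have b01: "b \<in> {0,1}" using ab by simp
        have Cemp: "C = {}" if "b \<notin> C" "1 - b \<notin> C"
        proof -
          have "x = b \<or> x = 1 - b" if "x \<in> C" for x using C b01 that by auto
          then show ?thesis using that by blast
        qed
        consider "b \<in> C" | "1 - b \<in> C" | "C = {}" using Cemp by blast
        then show ?thesis
        proof cases
          case 1 then show ?thesis using True by (auto simp: phi_def)
        next
          case 2
          have "(0, 1 - b) \<in> phi n C f" using 2 by (auto simp: phi_def)
          moreover have "adj (book_graph n) (0, 1-b) (a,b)" using True b01 by (auto simp: adj_book)
          ultimately show ?thesis by blast
        next
          case 3
          then obtain i where i: "i \<in> {1..n}" "b \<in> f i" using H b01 by auto
          have "(i, b) \<in> phi n C f" using i by (auto simp: phi_def)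
          moreover have "adj (book_graph n) (i, b) (a,b)" using True b01 i by (auto simp: adj_book)
          ultimately show ?thesis by blast
        qed
      next
        case False
        then have i: "a \<in> {1..n}" using ab by auto
        have b01: "b \<in> {0,1}" using ab by simp
        have fa: "f a \<subseteq> {0,1}" using fi[OF i] .
        have Hb: "b \<in> C \<or> f a \<noteq> {}" using H i b01 by auto
        have fne: "f a = {}" if "b \<notin> f a" "1 - b \<notin> f a"
        proof -
          have "x = b \<or> x = 1 - b" if "x \<in> f a" for x using fa b01 that by auto
          then show ?thesis using that by blast
        qed
        consider "b \<in> f a" | "1 - b \<in> f a" | "b \<in> C" using Hb fne by blast
        then show ?thesis
        proof cases
          case 1 then show ?thesis using i by (auto simp: phi_def)
        next
          case 2
          have "(a, 1 - b) \<in> phi n C f" using 2 i by (auto simp: phi_def)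
          moreover have "adj (book_graph n) (a, 1-b) (a,b)" using i b01 by (auto simp: adj_book)
          ultimately show ?thesis by blast
        next
          case 3
          have "(0, b) \<in> phi n C f" using 3 by (auto simp: phi_def)
          moreover have "adj (book_graph n) (0, b) (a,b)" using b01 i by (auto simp: adj_book)
          ultimately show ?thesis by blast
        qed
      qed
    qed
  qed
  finally show ?thesis .
qed

lemma two_poly: "(2::int poly) = [:2:]"
  by (metis numeral_One numeral_times_numeral one_pCons poly_const_pow  mult_numeral_1_right numeral_poly one_add_one)

lemma phi_inj: "inj_on (\<lambda>(C,f). phi n C f) (Pow {0,1} \<times> PiE {1..n} (\<lambda>_. Pow {0,1}))"
proof (rule inj_onI)
  fix x y
  assume x: "x \<in> Pow {0,1} \<times> PiE {1..n} (\<lambda>_. Pow {0,1})" and y: "y \<in> Pow {0,1} \<times> PiE {1..n} (\<lambda>_. Pow {0,1})"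
    and eq0: "(\<lambda>(C,f). phi n C f) x = (\<lambda>(C,f). phi n C f) y"
  obtain C f where xd: "x = (C,f)" by fastforce
  obtain C' f' where yd: "y = (C',f')" by fastforce
  have f: "f \<in> PiE {1..n} (\<lambda>_. Pow {0,1})" using x xd by auto
  have f': "f' \<in> PiE {1..n} (\<lambda>_. Pow {0,1})" using y yd by auto
  have eq: "phi n C f = phi n C' f'" using eq0 xd yd by simp
  have "C = {j. (0,j) \<in> phi n C f}" by (auto simp: phi_def)
  also have "\<dots> = C'" unfolding eq by (auto simp: phi_def)
  finally have CC: "C = C'" .
  have "f = f'"
  proof (rule PiE_ext[OF f f'])
    fix i assume i: "i \<in> {1..n}"
    have "f i = {j. (i,j) \<in> phi n C f}" using i by (auto simp: phi_def)
    also have "\<dots> = f' i" unfolding eq using i by (auto simp: phi_def)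
    finally show "f i = f' i" .
  qed
  with CC show "x = y" using xd yd by simp
qed

lemma phi_card:
  assumes C: "C \<subseteq> {0,1}" and f: "f \<in> PiE {1..n} (\<lambda>_. Pow {0,1})"
  shows "card (phi n C f) = card C + (\<Sum>i\<in>{1..n}. card (f i))"
proof -
  have fin: "finite C" using C finite_subset by blast
  have ffin: "\<And>i. i \<in> {1..n} \<Longrightarrow> finite (f i)" using f finite_subset by (auto simp: PiE_def Pi_def)
  have "card (phi n C f) = card (Pair (0::nat) ` C) + card (Sigma {1..n} f)"
    unfolding phi_def
    by (rule card_Un_disjoint) (use fin ffin in auto)
  also have "card (Pair (0::nat) ` C) = card C" by (simp add: card_image inj_on_def)
  also have "card (Sigma {1..n} f) = (\<Sum>i\<in>{1..n}. card (f i))" using ffin by (simp add: card_SigmaI)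
  finally show ?thesis .
qed

lemma dom_image:
  "{S. dominating_set (book_graph n) S} = (\<lambda>(C,f). phi n C f) `
     (SIGMA C:Pow {0,1}. {f \<in> PiE {1..n} (\<lambda>_. Pow {0,1}). dominating_set (book_graph n) (phi n C f)})"
proof (rule set_eqI, rule iffI)
  fix S assume "S \<in> {S. dominating_set (book_graph n) S}"
  then have dS: "dominating_set (book_graph n) S" by simp
  then have Ssub: "S \<subseteq> {0..n} \<times> {0,1}" by (simp add: dominating_set_def verts_book)
  define C where "C = {j. (0,j) \<in> S}"
  define f where "f = restrict (\<lambda>i. {j. (i,j) \<in> S}) {1..n}"
  have C: "C \<subseteq> {0,1}" using Ssub by (auto simp: C_def)
  have f: "f \<in> PiE {1..n} (\<lambda>_. Pow {0,1})" using Ssub by (auto simp: f_def)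
  have "phi n C f = S"
  proof (rule set_eqI)
    fix x show "x \<in> phi n C f \<longleftrightarrow> x \<in> S"
    proof (cases x)
      case (Pair a b)
      show ?thesis
      proof (cases "a = 0")
        case True then show ?thesis using Pair by (auto simp: phi_def C_def f_def)
      next
        case False
        then show ?thesis using Pair Ssub by (auto simp: phi_def C_def f_def)
      qed
    qed
  qed
  then show "S \<in> (\<lambda>(C,f). phi n C f) `
     (SIGMA C:Pow {0,1}. {f \<in> PiE {1..n} (\<lambda>_. Pow {0,1}). dominating_set (book_graph n) (phi n C f)})"
    using C f dS by (intro image_eqI[where x="(C,f)"]) auto
qed auto

lemma sum_PiE_pow:
  assumes "finite A" "\<And>a. a \<in> A \<Longrightarrow> finite a"
  shows "(\<Sum>f\<in>PiE {1..n} (\<lambda>_. A). ([:0,1:]::int poly) ^ (\<Sum>i\<in>{1..n}. card (f i)))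
         = (\<Sum>a\<in>A. [:0,1:] ^ card a) ^ n"
proof -
  have "(\<Sum>a\<in>A. ([:0,1:]::int poly) ^ card a) ^ n = (\<Prod>i\<in>{1..n}. \<Sum>a\<in>A. [:0,1:] ^ card a)"
    by simp
  also have "\<dots> = (\<Sum>f\<in>PiE {1..n} (\<lambda>_. A). \<Prod>i\<in>{1..n}. [:0,1:] ^ card (f i))"
    by (rule prod_sum_PiE) (use assms in auto)
  also have "\<dots> = (\<Sum>f\<in>PiE {1..n} (\<lambda>_. A). [:0,1:] ^ (\<Sum>i\<in>{1..n}. card (f i)))"
    by (simp add: power_sum)
  finally show ?thesis by simp
qed

lemma Pow01: "Pow {0::nat,1} = {{},{0},{1},{0,1}}" by blast

lemma F01: "{f \<in> PiE {1..n} (\<lambda>_. Pow {0,1}). dominating_set (book_graph n) (phi n {0,1} f)}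
   = PiE {1..n} (\<lambda>_. Pow {0,1})"
  using dom_char[of "{0,1}" _ n] by auto

lemma F0: "{f \<in> PiE {1..n} (\<lambda>_. Pow {0,1}). dominating_set (book_graph n) (phi n {0} f)}
   = PiE {1..n} (\<lambda>_. Pow {0,1} - {{}})"
proof (rule set_eqI)
  fix f
  show "f \<in> {f \<in> PiE {1..n} (\<lambda>_. Pow {0,1}). dominating_set (book_graph n) (phi n {0} f)} \<longleftrightarrow>
        f \<in> PiE {1..n} (\<lambda>_. Pow {0,1} - {{}})"
  proof (cases "f \<in> PiE {1..n} (\<lambda>_. Pow {0,1})")
    case True
    show ?thesis using True dom_char[OF _ True, of "{0}"] unfolding PiE_iff by auto
  next
    case False
    then show ?thesis unfolding PiE_iff by auto
  qed
qed

lemma F1: "{f \<in> PiE {1..n} (\<lambda>_. Pow {0,1}). dominating_set (book_graph n) (phi n {1} f)}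
   = PiE {1..n} (\<lambda>_. Pow {0,1} - {{}})"
proof (rule set_eqI)
  fix f
  show "f \<in> {f \<in> PiE {1..n} (\<lambda>_. Pow {0,1}). dominating_set (book_graph n) (phi n {1} f)} \<longleftrightarrow>
        f \<in> PiE {1..n} (\<lambda>_. Pow {0,1} - {{}})"
  proof (cases "f \<in> PiE {1..n} (\<lambda>_. Pow {0,1})")
    case True
    show ?thesis using True dom_char[OF _ True, of "{1}"] unfolding PiE_iff by auto
  next
    case False
    then show ?thesis unfolding PiE_iff by auto
  qed
qed

lemma Fe: "{f \<in> PiE {1..n} (\<lambda>_. Pow {0,1}). dominating_set (book_graph n) (phi n {} f)}
   = PiE {1..n} (\<lambda>_. Pow {0,1} - {{}}) - (PiE {1..n} (\<lambda>_. {{0}}) \<union> PiE {1..n} (\<lambda>_. {{1}}))"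
proof -
  have "f \<in> PiE {1..n} (\<lambda>_. Pow {0,1}) \<and> dominating_set (book_graph n) (phi n {} f) \<longleftrightarrow>
     f \<in> PiE {1..n} (\<lambda>_. Pow {0,1} - {{}}) - (PiE {1..n} (\<lambda>_. {{0}}) \<union> PiE {1..n} (\<lambda>_. {{1}}))" for f
  proof (cases "f \<in> PiE {1..n} (\<lambda>_. Pow {0,1})")
    case True
    have fi: "\<And>i. i \<in> {1..n} \<Longrightarrow> f i \<subseteq> {0,1}" using True by auto
    have e1: "f \<notin> PiE {1..n} (\<lambda>_. {{0}}) \<longleftrightarrow> (\<exists>i\<in>{1..n}. f i \<noteq> {0})" using True unfolding PiE_iff by auto
    have e2: "f \<notin> PiE {1..n} (\<lambda>_. {{1}}) \<longleftrightarrow> (\<exists>i\<in>{1..n}. f i \<noteq> {1})" using True unfolding PiE_iff by auto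
    have eQ: "f \<in> PiE {1..n} (\<lambda>_. Pow {0,1} - {{}}) \<longleftrightarrow> (\<forall>i\<in>{1..n}. f i \<noteq> {})" using True unfolding PiE_iff by auto
    have k0: "f i \<noteq> {1} \<longleftrightarrow> 0 \<in> f i" if "i \<in> {1..n}" "f i \<noteq> {}" for i
    proof -
      have "f i \<subseteq> {0,1}" using fi[OF that(1)] .
      then show ?thesis using that(2) by auto
    qed
    have k1: "f i \<noteq> {0} \<longleftrightarrow> 1 \<in> f i" if "i \<in> {1..n}" "f i \<noteq> {}" for i
    proof -
      have "f i \<subseteq> {0,1}" using fi[OF that(1)] .
      then show ?thesis using that(2) by auto
    qed
    have L: "dominating_set (book_graph n) (phi n {} f) \<longleftrightarrow>
       (\<forall>i\<in>{1..n}. f i \<noteq> {}) \<and> (\<exists>i\<in>{1..n}. 0 \<in> f i) \<and> (\<exists>i\<in>{1..n}. 1 \<in> f i)"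
      using dom_char[OF empty_subsetI True] by simp
    have R: "f \<in> PiE {1..n} (\<lambda>_. Pow {0,1} - {{}}) - (PiE {1..n} (\<lambda>_. {{0}}) \<union> PiE {1..n} (\<lambda>_. {{1}})) \<longleftrightarrow>
       (\<forall>i\<in>{1..n}. f i \<noteq> {}) \<and> (\<exists>i\<in>{1..n}. f i \<noteq> {0}) \<and> (\<exists>i\<in>{1..n}. f i \<noteq> {1})"
      using e1 e2 eQ by blast
    show ?thesis
    proof
      assume "f \<in> PiE {1..n} (\<lambda>_. Pow {0,1}) \<and> dominating_set (book_graph n) (phi n {} f)"
      then have "dominating_set (book_graph n) (phi n {} f)" by (rule conjunct2)
      then have NN: "(\<forall>i\<in>{1..n}. f i \<noteq> {}) \<and> (\<exists>i\<in>{1..n}. 0 \<in> f i) \<and> (\<exists>i\<in>{1..n}. 1 \<in> f i)"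
        by (rule L[THEN iffD1])
      then have N: "\<forall>i\<in>{1..n}. f i \<noteq> {}" and a: "\<exists>i\<in>{1..n}. 0 \<in> f i" and b: "\<exists>i\<in>{1..n}. 1 \<in> f i"
        by (rule conjunct1, rule conjunct1[OF conjunct2], rule conjunct2[OF conjunct2])
      from a obtain i where "i \<in> {1..n}" "0 \<in> f i" by blast
      then have c: "\<exists>i\<in>{1..n}. f i \<noteq> {1}" by auto
      from b obtain j where "j \<in> {1..n}" "1 \<in> f j" by blast
      then have d: "\<exists>i\<in>{1..n}. f i \<noteq> {0}" by auto
      show "f \<in> PiE {1..n} (\<lambda>_. Pow {0,1} - {{}}) - (PiE {1..n} (\<lambda>_. {{0}}) \<union> PiE {1..n} (\<lambda>_. {{1}}))"
        using R N c d by simp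
    next
      assume "f \<in> PiE {1..n} (\<lambda>_. Pow {0,1} - {{}}) - (PiE {1..n} (\<lambda>_. {{0}}) \<union> PiE {1..n} (\<lambda>_. {{1}}))"
      then have NN: "(\<forall>i\<in>{1..n}. f i \<noteq> {}) \<and> (\<exists>i\<in>{1..n}. f i \<noteq> {0}) \<and> (\<exists>i\<in>{1..n}. f i \<noteq> {1})"
        by (rule R[THEN iffD1])
      then have N: "\<forall>i\<in>{1..n}. f i \<noteq> {}" and d: "\<exists>i\<in>{1..n}. f i \<noteq> {0}" and c: "\<exists>i\<in>{1..n}. f i \<noteq> {1}"
        by (rule conjunct1, rule conjunct1[OF conjunct2], rule conjunct2[OF conjunct2])
      from c obtain i where i: "i \<in> {1..n}" "f i \<noteq> {1}" by blast
      then have a: "\<exists>i\<in>{1..n}. 0 \<in> f i" using k0[OF i(1)] N by auto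
      from d obtain j where j: "j \<in> {1..n}" "f j \<noteq> {0}" by blast
      then have b: "\<exists>i\<in>{1..n}. 1 \<in> f i" using k1[OF j(1)] N by auto
      show "f \<in> PiE {1..n} (\<lambda>_. Pow {0,1}) \<and> dominating_set (book_graph n) (phi n {} f)"
        using True L N a b by simp
    qed
  next
    case False
    have sub: "PiE {1..n} (\<lambda>_. Pow {0::nat,1} - {{}}) \<subseteq> PiE {1..n} (\<lambda>_. Pow {0,1})" by (rule PiE_mono) auto
    show ?thesis using False sub by blast
  qed
  then show ?thesis by (intro set_eqI) simp
qed

lemma sumQ: "(\<Sum>a\<in>Pow {0::nat,1} - {{}}. ([:0,1:]::int poly) ^ card a) = [:0,2,1:]"
proof -
  have "Pow {0::nat,1} - {{}} = {{0},{1},{0,1}}" by blast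
  then show ?thesis by simp
qed

lemma sumP: "(\<Sum>a\<in>Pow {0::nat,1}. ([:0,1:]::int poly) ^ card a) = [:1,2,1:]"
  unfolding Pow01 by (simp add: one_pCons)

lemma final_alg: "(A::int poly) = B + X*C + X*D + X^2*E \<Longrightarrow> C = Q^n \<Longrightarrow> D = Q^n \<Longrightarrow> E = R^n \<Longrightarrow> B = Q^n - X^n - X^n \<Longrightarrow>
  A = Q^n * (1 + 2*X) + X^2 * R^n - 2 * X^n"
  by (simp add: algebra_simps)

lemma l_a: "([:1,2:]::int poly) = 1 + 2*[:0,1:]"
  by (simp add: two_poly one_pCons)
lemma l_b: "([:0,0,1:]::int poly) = [:0,1:]^2"
  by (simp add: power2_eq_square)
lemma l_c: "([:1,1:]::int poly)^(2*n) = [:1,2,1:]^n"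
proof -
  have "([:1,1:]::int poly)^2 = [:1,2,1:]" by (simp add: power2_eq_square one_pCons)
  then show ?thesis by (simp add: power_mult)
qed
lemma l_d: "smult 2 (monom 1 n) = (2::int poly) * [:0,1:]^n"
  by (simp add: monom_altdef two_poly)

theorem mainTheorem5:
  fixes n :: nat
  assumes "n \<ge> 1"
  shows "domination_poly (book_graph n) =
    [:0, 2, 1:] ^ n * [:1, 2:] + [:0, 0, 1:] * [:1, 1:] ^ (2 * n) - smult 2 (monom 1 n)"
proof -
  define X where "X = ([:0,1:] :: int poly)"
  define P where "P = PiE {1..n} (\<lambda>_. Pow {0::nat,1})"
  define F where "F C = {f \<in> P. dominating_set (book_graph n) (phi n C f)}" for C
  define T where "T C = (\<Sum>f\<in>F C. X ^ (\<Sum>i\<in>{1..n}. card (f i)))" for C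
  have finP: "finite P" unfolding P_def by (intro finite_PiE) auto
  have FP: "F C \<subseteq> P" for C unfolding F_def by auto
  have finF: "finite (F C)" for C using finP FP finite_subset by blast
  have "domination_poly (book_graph n) =
        (\<Sum>S\<in>(\<lambda>(C,f). phi n C f) ` (SIGMA C:Pow {0,1}. F C). monom 1 (card S))"
    unfolding domination_poly_def dom_image F_def P_def ..
  also have "\<dots> = (\<Sum>(C,f)\<in>(SIGMA C:Pow {0,1}. F C). monom 1 (card (phi n C f)))"
  proof (subst sum.reindex)
    show "inj_on (\<lambda>(C,f). phi n C f) (SIGMA C:Pow {0,1}. F C)"
      by (rule inj_on_subset[OF phi_inj]) (auto simp: F_def P_def)
  qed (simp add: case_prod_unfold)
  also have "\<dots> = (\<Sum>C\<in>Pow {0,1}. \<Sum>f\<in>F C. monom 1 (card (phi n C f)))"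
    by (rule sum.Sigma[symmetric]) (auto simp: finF)
  also have "\<dots> = (\<Sum>C\<in>Pow {0,1}. X ^ card C * T C)"
  proof (rule sum.cong[OF refl])
    fix C :: "nat set" assume C: "C \<in> Pow {0,1}"
    have "(\<Sum>f\<in>F C. monom 1 (card (phi n C f))) = (\<Sum>f\<in>F C. X ^ card C * X ^ (\<Sum>i\<in>{1..n}. card (f i)))"
    proof (rule sum.cong[OF refl])
      fix f assume "f \<in> F C"
      then have "f \<in> P" using FP by auto
      then show "monom 1 (card (phi n C f)) = X ^ card C * X ^ (\<Sum>i\<in>{1..n}. card (f i))"
        using phi_card[of C f n] C unfolding P_def X_def by (simp add: monom_altdef power_add)
    qed
    also have "\<dots> = X ^ card C * T C" unfolding T_def by (simp add: sum_distrib_left)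
    finally show "(\<Sum>f\<in>F C. monom 1 (card (phi n C f))) = X ^ card C * T C" .
  qed
  also have "\<dots> = T {} + X * T {0} + X * T {1} + X^2 * T {0,1}"
    unfolding Pow01 by (simp add: algebra_simps power2_eq_square)
  finally have main: "domination_poly (book_graph n) = T {} + X * T {0} + X * T {1} + X^2 * T {0,1}" .
  have T01: "T {0,1} = [:1,2,1:] ^ n"
    unfolding T_def F_def P_def F01 X_def using sumP by (subst sum_PiE_pow) (auto intro: finite_subset)
  have T0: "T {0} = [:0,2,1:] ^ n"
    unfolding T_def F_def P_def F0 X_def using sumQ by (subst sum_PiE_pow) (auto intro: finite_subset)
  have T1: "T {1} = [:0,2,1:] ^ n"
    unfolding T_def F_def P_def F1 X_def using sumQ by (subst sum_PiE_pow) (auto intro: finite_subset)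
  have Te: "T {} = [:0,2,1:] ^ n - X ^ n - X ^ n"
  proof -
    define Q where "Q = PiE {1..n} (\<lambda>_. Pow {0::nat,1} - {{}})"
    define A0 where "A0 = PiE {1..n} (\<lambda>_. {{0::nat}})"
    define A1 where "A1 = PiE {1..n} (\<lambda>_. {{1::nat}})"
    define g where "g f = X ^ (\<Sum>i\<in>{1..n}. card (f i))" for f :: "nat \<Rightarrow> nat set"
    have finQ: "finite Q" unfolding Q_def by (intro finite_PiE) auto
    have sub: "A0 \<union> A1 \<subseteq> Q" unfolding A0_def A1_def Q_def by (auto simp: PiE_iff)
    have disj: "A0 \<inter> A1 = {}"
    proof (rule ccontr)
      assume "A0 \<inter> A1 \<noteq> {}"
      then obtain f where "f \<in> A0" "f \<in> A1" by blast
      then have "f 1 = {0}" "f 1 = {1}" using assms unfolding A0_def A1_def PiE_iff by auto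
      then show False by auto
    qed
    have finA: "finite A0" "finite A1" using sub finQ finite_subset by blast+
    have e1: "T {} = sum g (Q - (A0 \<union> A1))" unfolding T_def F_def P_def Fe Q_def A0_def A1_def g_def ..
    have e2: "sum g (Q - (A0 \<union> A1)) = sum g Q - sum g (A0 \<union> A1)" using sub finQ by (simp add: sum_diff)
    have e3: "sum g (A0 \<union> A1) = sum g A0 + sum g A1" using disj finA by (simp add: sum.union_disjoint)
    have e4: "sum g Q = [:0,2,1:] ^ n" unfolding g_def Q_def X_def using sumQ by (subst sum_PiE_pow) (auto intro: finite_subset)
    have e5: "sum g A0 = X ^ n" unfolding g_def A0_def X_def by (subst sum_PiE_pow) auto
    have e6: "sum g A1 = X ^ n" unfolding g_def A1_def X_def by (subst sum_PiE_pow) auto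
    show ?thesis unfolding e1 e2 e3 e4 e5 e6 by simp
  qed
  have "domination_poly (book_graph n) = [:0,2,1:]^n * (1 + 2*X) + X^2 * [:1,2,1:]^n - 2 * X^n"
    by (rule final_alg[OF main T0 T1 T01 Te])
  then show ?thesis unfolding l_a l_b l_c l_d X_def .
qed

end
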